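(* Let $n\geq 2$ and let $L'_n$ be the graph of the $\alpha,\omega$-dicyclobutadieno derivative of $[n-1]$-phenylene (defined in the context). Then the base polynomial counting distances between pairs of degree-2 vertices of $L'_n$ is \begin{eqnarray*} H^{2,2}_{b}(L'_{n}) &=& 2x+(3n-1)x^{3}+2\sum_{k=2}^{n-1}(n-k)x^{3k-2}+4\sum_{k=1}^{n-1}x^{3k-1}\\ &&+2\sum_{k=2}^{n-1}(n-k+1)x^{3k}+2x^{3n-2}+2x^{3n-1}. \end{eqnarray*}
   Context: All graphs are finite, simple and connected; $d(u,v)$ denotes the shortest-path distance and $d_u$ the degree of a vertex $u$. For a graph $G$ and a degree $p$, the base polynomial is $H^{p,p}_{b}(G)=\sum x^{d(u,v)}$, where the sum runs over all unordered pairs $\{u,v\}$ of distinct vertices of $G$ both of degree $p$. Construction of $L'_n$ ($n\ge 2$): take $n-1$ hexagons $H_1,\dots,H_{n-1}$, hexagon $H_i$ being the 6-cycle $a_i b_i c_i d_i e_i f_i a_i$, and for $i=1,\dots,n-2$ add edges $b_i f_{i+1}$ and $c_i e_{i+1}$ (so consecutive hexagons are joined by the 4-cycle $b_i c_i e_{i+1} f_{i+1}$). Then add four new vertices $p,q,r,s$ with edges $pq$, $pf_1$, $qe_1$ (forming the 4-cycle $f_1 e_1 q p$) and $rs$, $rb_{n-1}$, $sc_{n-1}$ (forming the 4-cycle $b_{n-1} c_{n-1} s r$). Thus $L'_n$ has $n-1$ hexagons and $n$ squares, $2n+2$ vertices of degree 2 and $4n-4$ vertices of degree 3. *)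

theory Defs
  imports "HOL-Computational_Algebra.Polynomial"
begin

definition walk :: "'a set \<Rightarrow> ('a \<Rightarrow> 'a \<Rightarrow> bool) \<Rightarrow> 'a list \<Rightarrow> bool" where
  "walk V E xs \<longleftrightarrow> xs \<noteq> [] \<and> set xs \<subseteq> V \<and>
     (\<forall>i. Suc i < length xs \<longrightarrow> E (xs ! i) (xs ! Suc i))"

definition gdist :: "'a set \<Rightarrow> ('a \<Rightarrow> 'a \<Rightarrow> bool) \<Rightarrow> 'a \<Rightarrow> 'a \<Rightarrow> nat" where
  "gdist V E u v = (LEAST k. \<exists>xs. walk V E xs \<and> hd xs = u \<and> last xs = v \<and> length xs = Suc k)"

definition gdegree :: "'a set \<Rightarrow> ('a \<Rightarrow> 'a \<Rightarrow> bool) \<Rightarrow> 'a \<Rightarrow> nat" where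
  "gdegree V E u = card {w \<in> V. E u w}"

definition deg_pairs :: "'a set \<Rightarrow> ('a \<Rightarrow> 'a \<Rightarrow> bool) \<Rightarrow> nat \<Rightarrow> 'a set set" where
  "deg_pairs V E p = {{u, v} | u v. u \<in> V \<and> v \<in> V \<and> u \<noteq> v \<and>
       gdegree V E u = p \<and> gdegree V E v = p}"

text \<open>Distance between the two endpoints of an unordered pair (well defined since
  distances in an undirected graph are symmetric).\<close>
definition pair_dist :: "'a set \<Rightarrow> ('a \<Rightarrow> 'a \<Rightarrow> bool) \<Rightarrow> 'a set \<Rightarrow> nat" where
  "pair_dist V E e = (THE d. \<exists>u v. e = {u, v} \<and> u \<noteq> v \<and> d = gdist V E u v)"

definition base_poly :: "'a set \<Rightarrow> ('a \<Rightarrow> 'a \<Rightarrow> bool) \<Rightarrow> nat \<Rightarrow> nat poly" where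
  "base_poly V E p = (\<Sum>e\<in>deg_pairs V E p. monom 1 (pair_dist V E e))"

datatype lvert = Av nat | Bv nat | Cv nat | Dv nat | Ev nat | Fv nat
  | Pv | Qv | Rv | Sv

definition Lverts :: "nat \<Rightarrow> lvert set" where
  "Lverts n = (\<Union>i\<in>{1..n-1}. {Av i, Bv i, Cv i, Dv i, Ev i, Fv i}) \<union> {Pv, Qv, Rv, Sv}"

definition Ledges :: "nat \<Rightarrow> lvert set set" where
  "Ledges n =
     (\<Union>i\<in>{1..n-1}. {{Av i, Bv i}, {Bv i, Cv i}, {Cv i, Dv i}, {Dv i, Ev i},
                     {Ev i, Fv i}, {Fv i, Av i}})
   \<union> (\<Union>i\<in>{1..n-2}. {{Bv i, Fv (i+1)}, {Cv i, Ev (i+1)}})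
   \<union> {{Pv, Qv}, {Pv, Fv 1}, {Qv, Ev 1}, {Rv, Sv}, {Rv, Bv (n-1)}, {Sv, Cv (n-1)}}"

definition Ladj :: "nat \<Rightarrow> lvert \<Rightarrow> lvert \<Rightarrow> bool" where
  "Ladj n u v \<longleftrightarrow> u \<noteq> v \<and> {u, v} \<in> Ledges n"

end

theory Submission
  imports Defs
begin



fun pos :: "nat \<Rightarrow> lvert \<Rightarrow> nat" where
  "pos n Pv = 2" | "pos n Qv = 2" | "pos n Rv = 3*n" | "pos n Sv = 3*n"
| "pos n (Fv i) = 3*i" | "pos n (Ev i) = 3*i" | "pos n (Av i) = 3*i+1" | "pos n (Dv i) = 3*i+1"
| "pos n (Bv i) = 3*i+2" | "pos n (Cv i) = 3*i+2"

fun side :: "lvert \<Rightarrow> bool" where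
  "side Pv = True" | "side Qv = False" | "side Rv = True" | "side Sv = False"
| "side (Fv i) = True" | "side (Ev i) = False" | "side (Av i) = True" | "side (Dv i) = False"
| "side (Bv i) = True" | "side (Cv i) = False"

definition madj :: "nat \<Rightarrow> bool \<Rightarrow> nat \<Rightarrow> bool \<Rightarrow> bool" where
  "madj x s y t = ((s = t \<and> (x = Suc y \<or> y = Suc x)) \<or> (s \<noteq> t \<and> x = y \<and> x mod 3 \<noteq> 1))"

lemma Lverts_simps:
  "Pv \<in> Lverts n" "Qv \<in> Lverts n" "Rv \<in> Lverts n" "Sv \<in> Lverts n"
  "Av i \<in> Lverts n \<longleftrightarrow> 1 \<le> i \<and> i \<le> n-1"
  "Bv i \<in> Lverts n \<longleftrightarrow> 1 \<le> i \<and> i \<le> n-1"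
  "Cv i \<in> Lverts n \<longleftrightarrow> 1 \<le> i \<and> i \<le> n-1"
  "Dv i \<in> Lverts n \<longleftrightarrow> 1 \<le> i \<and> i \<le> n-1"
  "Ev i \<in> Lverts n \<longleftrightarrow> 1 \<le> i \<and> i \<le> n-1"
  "Fv i \<in> Lverts n \<longleftrightarrow> 1 \<le> i \<and> i \<le> n-1"
  by (auto simp: Lverts_def)

lemma LA:
  assumes "n \<ge> 2" "u \<in> Lverts n" "v \<in> Lverts n"
  shows "Ladj n u v \<longleftrightarrow> madj (pos n u) (side u) (pos n v) (side v)"
  using assms
  apply (cases u; cases v)
  apply (auto simp: Lverts_simps Ladj_def Ledges_def madj_def doubleton_eq_iff)
  apply presburger+
  done

lemma mod3_simps[simp]:
  "Suc (Suc (3*x)) mod 3 = 2" "Suc (3*x) mod 3 = 1"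
  "Suc (Suc (3*x)) div 3 = x" "Suc (3*x) div 3 = x"
  by presburger+

definition vert :: "nat \<Rightarrow> nat \<Rightarrow> bool \<Rightarrow> lvert" where
  "vert n x s = (if x = 2 then (if s then Pv else Qv)
     else if x = 3*n then (if s then Rv else Sv)
     else if x mod 3 = 0 then (if s then Fv (x div 3) else Ev (x div 3))
     else if x mod 3 = 1 then (if s then Av (x div 3) else Dv (x div 3))
     else (if s then Bv (x div 3) else Cv (x div 3)))"

lemma VP:
  assumes "n \<ge> 2" "2 \<le> x" "x \<le> 3*n"
  shows "vert n x s \<in> Lverts n \<and> pos n (vert n x s) = x \<and> side (vert n x s) = s"
proof -
  have "x = 2 \<or> x = 3*n \<or> (x \<noteq> 2 \<and> x \<noteq> 3*n \<and> x mod 3 = 0) \<or> (x \<noteq> 2 \<and> x \<noteq> 3*n \<and> x mod 3 = 1)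
     \<or> (x \<noteq> 2 \<and> x \<noteq> 3*n \<and> x mod 3 = 2)" by presburger
  moreover have "x mod 3 = 0 \<Longrightarrow> x \<noteq> 3*n \<Longrightarrow> 1 \<le> x div 3 \<and> x div 3 \<le> n - 1 \<and> 3 * (x div 3) = x"
    using assms by presburger
  moreover have "x mod 3 = 1 \<Longrightarrow> 1 \<le> x div 3 \<and> x div 3 \<le> n - 1 \<and> 3 * (x div 3) + 1 = x"
    using assms by presburger
  moreover have "x mod 3 = 2 \<Longrightarrow> x \<noteq> 2 \<Longrightarrow> 1 \<le> x div 3 \<and> x div 3 \<le> n - 1 \<and> 3 * (x div 3) + 2 = x"
    using assms by presburger
  ultimately show ?thesis using assms
    by (cases s) (auto simp: vert_def Lverts_simps)
qed

lemma VR: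
  assumes "n \<ge> 2" "u \<in> Lverts n"
  shows "2 \<le> pos n u \<and> pos n u \<le> 3*n \<and> vert n (pos n u) (side u) = u"
  using assms by (cases u) (auto simp: Lverts_simps vert_def)



lemma walk_snoc:
  assumes "walk V E ys" "E (last ys) v" "v \<in> V"
  shows "walk V E (ys @ [v])"
  unfolding walk_def
proof (intro conjI allI impI)
  show "ys @ [v] \<noteq> []" by simp
  show "set (ys @ [v]) \<subseteq> V" using assms by (auto simp: walk_def)
  fix i assume i: "Suc i < length (ys @ [v])"
  show "E ((ys @ [v]) ! i) ((ys @ [v]) ! Suc i)"
  proof (cases "Suc i < length ys")
    case True
    then show ?thesis using assms(1) by (auto simp: walk_def nth_append)
  next
    case False
    then have "i = length ys - 1" "ys \<noteq> []" using i assms(1) by (auto simp: walk_def)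
    then show ?thesis using assms(2) by (auto simp: nth_append last_conv_nth)
  qed
qed

lemma gdist_char:
  assumes uV: "u \<in> V" and vV: "v \<in> V"
  and D0: "D u = 0"
  and lip: "\<And>x y. x \<in> V \<Longrightarrow> y \<in> V \<Longrightarrow> E x y \<Longrightarrow> D y \<le> D x + 1"
  and desc: "\<And>x. x \<in> V \<Longrightarrow> x \<noteq> u \<Longrightarrow> \<exists>y\<in>V. E y x \<and> D y + 1 = D x"
  shows "gdist V E u v = D v"
proof -
  have lower: "D (xs ! i) \<le> i" if "walk V E xs" "hd xs = u" "i < length xs" for xs i
    using that(3)
  proof (induction i)
    case 0
    then show ?case using that D0 by (simp add: hd_conv_nth)
  next
    case (Suc i)
    have "E (xs ! i) (xs ! Suc i)" "xs ! i \<in> V" "xs ! Suc i \<in> V"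
      using that(1) Suc.prems by (auto simp: walk_def)
    then have "D (xs ! Suc i) \<le> D (xs ! i) + 1" by (rule lip[rotated 2]) 
    then show ?case using Suc by simp
  qed
  have upper: "\<forall>w\<in>V. D w = k \<longrightarrow> (\<exists>xs. walk V E xs \<and> hd xs = u \<and> last xs = w \<and> length xs = Suc k)" for k
  proof (induction k)
    case 0
    show ?case
    proof (intro ballI impI)
      fix w assume "w \<in> V" "D w = 0"
      then have "w = u" using desc by fastforce
      then show "\<exists>xs. walk V E xs \<and> hd xs = u \<and> last xs = w \<and> length xs = Suc 0"
        using uV by (intro exI[of _ "[u]"]) (auto simp: walk_def)
    qed
  next
    case (Suc k)
    show ?case
    proof (intro ballI impI)
      fix w assume w: "w \<in> V" "D w = Suc k"
      then have "w \<noteq> u" using D0 by auto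
      then obtain y where y: "y \<in> V" "E y w" "D y + 1 = D w" using desc w by blast
      then obtain ys where ys: "walk V E ys" "hd ys = u" "last ys = y" "length ys = Suc k"
        using Suc.IH w by auto
      have "walk V E (ys @ [w])" using walk_snoc[of V E ys w] ys y w by simp
      moreover have "hd (ys @ [w]) = u" using ys by (cases ys) auto
      ultimately show "\<exists>xs. walk V E xs \<and> hd xs = u \<and> last xs = w \<and> length xs = Suc (Suc k)"
        using ys by (intro exI[of _ "ys @ [w]"]) auto
    qed
  qed
  show ?thesis unfolding gdist_def
  proof (rule Least_equality)
    show "\<exists>xs. walk V E xs \<and> hd xs = u \<and> last xs = v \<and> length xs = Suc (D v)"
      using upper vV by blast
  next
    fix k assume "\<exists>xs. walk V E xs \<and> hd xs = u \<and> last xs = v \<and> length xs = Suc k"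
    then obtain xs where xs: "walk V E xs" "hd xs = u" "last xs = v" "length xs = Suc k" by blast
    then have "last xs = xs ! k" by (metis diff_Suc_1 last_conv_nth list.size(3) nat.distinct(1))
    then show "D v \<le> k" using lower[OF xs(1,2), of k] xs by simp
  qed
qed

definition dd :: "nat \<Rightarrow> bool \<Rightarrow> nat \<Rightarrow> bool \<Rightarrow> nat" where
  "dd a b x s = (if a \<le> x then x - a else a - x) +
     (if b = s then 0 else if a = x \<and> a mod 3 = 1 then 3 else 1)"

lemma model_lip:
  assumes "madj x s y t"
  shows "dd a b y t \<le> dd a b x s + 1"
  using assms unfolding madj_def dd_def
  by (cases b; cases s; cases t) (auto split: if_splits)

lemma model_desc:
  assumes "2 \<le> a" "a \<le> 3*n" "2 \<le> x" "x \<le> 3*n" "(x, s) \<noteq> (a, b)"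
  shows "\<exists>y t. 2 \<le> y \<and> y \<le> 3*n \<and> madj y t x s \<and> dd a b y t + 1 = dd a b x s"
proof (cases "s = b")
  case True
  then have "x \<noteq> a" using assms by auto
  show ?thesis
  proof (cases "x < a")
    case True
    then show ?thesis using \<open>s = b\<close> assms
      by (intro exI[of _ "Suc x"] exI[of _ s]) (auto simp: madj_def dd_def)
  next
    case False
    then show ?thesis using \<open>s = b\<close> \<open>x \<noteq> a\<close> assms
      by (intro exI[of _ "x - 1"] exI[of _ s]) (auto simp: madj_def dd_def)
  qed
next
  case False
  show ?thesis
  proof (cases "x mod 3 = 1")
    case False
    then show ?thesis using \<open>s \<noteq> b\<close> assms
      by (intro exI[of _ x] exI[of _ b]) (auto simp: madj_def dd_def)
  next
    case True
    have "x \<noteq> 2" "x \<noteq> 3*n" using True by auto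
    then have x: "3 \<le> x" "x < 3*n" using assms by auto
    show ?thesis
    proof (cases "x \<le> a")
      case True
      then show ?thesis using \<open>s \<noteq> b\<close> \<open>x mod 3 = 1\<close> x assms
        by (intro exI[of _ "Suc x"] exI[of _ s]) (auto simp: madj_def dd_def mod_Suc)
    next
      case False
      have "(x - 1) mod 3 = 0" using \<open>x mod 3 = 1\<close> x by presburger
      then show ?thesis using \<open>s \<noteq> b\<close> \<open>x mod 3 = 1\<close> x assms False
        by (intro exI[of _ "x - 1"] exI[of _ s]) (auto simp: madj_def dd_def)
    qed
  qed
qed

lemma Gdist:
  assumes n: "n \<ge> 2" and u: "u \<in> Lverts n" and v: "v \<in> Lverts n"
  shows "gdist (Lverts n) (Ladj n) u v = dd (pos n u) (side u) (pos n v) (side v)"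
proof (rule gdist_char[OF u v, where D = "\<lambda>w. dd (pos n u) (side u) (pos n w) (side w)"])
  show "dd (pos n u) (side u) (pos n u) (side u) = 0" by (simp add: dd_def)
next
  fix x y assume "x \<in> Lverts n" "y \<in> Lverts n" "Ladj n x y"
  then have "madj (pos n x) (side x) (pos n y) (side y)" using LA n by blast
  then show "dd (pos n u) (side u) (pos n y) (side y) \<le> dd (pos n u) (side u) (pos n x) (side x) + 1"
    by (rule model_lip)
next
  fix x assume x: "x \<in> Lverts n" "x \<noteq> u"
  have "(pos n x, side x) \<noteq> (pos n u, side u)" using VR[OF n x(1)] VR[OF n u] x(2) by (metis prod.inject)
  then obtain y t where yt: "2 \<le> y" "y \<le> 3*n" "madj y t (pos n x) (side x)"
      "dd (pos n u) (side u) y t + 1 = dd (pos n u) (side u) (pos n x) (side x)"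
    using model_desc[of "pos n u" n "pos n x" "side x" "side u"] VR[OF n x(1)] VR[OF n u] by blast
  have w: "vert n y t \<in> Lverts n" "pos n (vert n y t) = y" "side (vert n y t) = t"
    using VP[OF n yt(1,2)] by auto
  show "\<exists>w\<in>Lverts n. Ladj n w x \<and> dd (pos n u) (side u) (pos n w) (side w) + 1 =
          dd (pos n u) (side u) (pos n x) (side x)"
    using w yt LA[OF n w(1) x(1)] by (intro bexI[of _ "vert n y t"]) auto
qed

lemma pair_dist_eq:
  assumes sym: "gdist V E a b = gdist V E b a" and "a \<noteq> b"
  shows "pair_dist V E {a, b} = gdist V E a b"
  unfolding pair_dist_def
proof (rule the_equality)
  show "\<exists>u v. {a, b} = {u, v} \<and> u \<noteq> v \<and> gdist V E a b = gdist V E u v"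
    using assms by blast
next
  fix d assume "\<exists>u v. {a, b} = {u, v} \<and> u \<noteq> v \<and> d = gdist V E u v"
  then obtain u v where "{a, b} = {u, v}" "d = gdist V E u v" by blast
  then show "d = gdist V E a b" using sym by (auto simp: doubleton_eq_iff)
qed

lemma Lverts_finite: "finite (Lverts n)"
  by (simp add: Lverts_def)

definition mdeg :: "nat \<Rightarrow> nat \<Rightarrow> nat" where
  "mdeg n x = (if x = 2 \<or> x = 3*n \<or> x mod 3 = 1 then 2 else 3)"

definition MN :: "nat \<Rightarrow> nat \<Rightarrow> bool \<Rightarrow> (nat \<times> bool) set" where
  "MN n x s = {(y, t). 2 \<le> y \<and> y \<le> 3*n \<and> madj x s y t}"

lemma MN3: "4 \<le> x \<Longrightarrow> x + 1 \<le> 3*n \<Longrightarrow> x mod 3 = 1 \<Longrightarrow> MN n x s = {(x - 1, s), (x + 1, s)}"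
  unfolding MN_def madj_def by auto
lemma MN4: "3 \<le> x \<Longrightarrow> x < 3*n \<Longrightarrow> x mod 3 \<noteq> 1 \<Longrightarrow> MN n x s = {(x - 1, s), (x + 1, s), (x, \<not> s)}"
  unfolding MN_def madj_def by auto

lemma MN_card:
  assumes n: "n \<ge> 2" and x: "2 \<le> x" "x \<le> 3*n"
  shows "card (MN n x s) = mdeg n x"
proof -
  consider "x = 2" | "x = 3*n" | "x \<noteq> 2" "x \<noteq> 3*n" "x mod 3 = 1"
    | "x \<noteq> 2" "x \<noteq> 3*n" "x mod 3 \<noteq> 1" by blast
  then show ?thesis
  proof cases
    case 1
    then have "MN n x s = {(3, s), (2, \<not> s)}" using n
      by (auto simp: MN_def madj_def)
    then show ?thesis using 1 by (simp add: mdeg_def)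
  next
    case 2
    then have "MN n x s = {(3*n - 1, s), (3*n, \<not> s)}" using n
      by (auto simp: MN_def madj_def)
    then show ?thesis using 2 by (simp add: mdeg_def)
  next
    case 3
    then have "4 \<le> x" "x + 1 \<le> 3*n" using x by presburger+
    then have "MN n x s = {(x - 1, s), (x + 1, s)}" using 3 by (intro MN3)
    then show ?thesis using 3 x by (simp add: mdeg_def)
  next
    case 4
    then have "MN n x s = {(x - 1, s), (x + 1, s), (x, \<not> s)}" using n x by (intro MN4) auto
    have "card {(x - 1, s), (x + 1, s), (x, \<not> s)} = 3" using 4 x by auto
    then show ?thesis using 4 \<open>MN n x s = _\<close> by (simp add: mdeg_def)
  qed
qed

lemma vert_inj: "inj_on (\<lambda>(y, t). vert n y t) {(y, t). 2 \<le> y \<and> y \<le> 3*n}" if "n \<ge> 2"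
proof (rule inj_onI, clarify)
  fix a b c d assume h: "2 \<le> a" "a \<le> 3*n" "2 \<le> c" "c \<le> 3*n" "vert n a b = vert n c d"
  have "pos n (vert n a b) = a" "side (vert n a b) = b" using VP[OF that h(1,2)] by auto
  moreover have "pos n (vert n c d) = c" "side (vert n c d) = d" using VP[OF that h(3,4)] by auto
  ultimately show "a = c \<and> b = d" using h(5) by simp
qed

lemma Gdeg:
  assumes n: "n \<ge> 2" and u: "u \<in> Lverts n"
  shows "gdegree (Lverts n) (Ladj n) u = mdeg n (pos n u)"
proof -
  have "{w \<in> Lverts n. Ladj n u w} = (\<lambda>(y, t). vert n y t) ` MN n (pos n u) (side u)"
  proof (intro equalityI subsetI)
    fix w assume "w \<in> {w \<in> Lverts n. Ladj n u w}"
    then have w: "w \<in> Lverts n" "Ladj n u w" by auto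
    then have "madj (pos n u) (side u) (pos n w) (side w)" using LA[OF n u] by blast
    then have "(pos n w, side w) \<in> MN n (pos n u) (side u)" using VR[OF n w(1)] by (simp add: MN_def)
    moreover have "w = (\<lambda>(y, t). vert n y t) (pos n w, side w)" using VR[OF n w(1)] by simp
    ultimately show "w \<in> (\<lambda>(y, t). vert n y t) ` MN n (pos n u) (side u)" by blast
  next
    fix w assume "w \<in> (\<lambda>(y, t). vert n y t) ` MN n (pos n u) (side u)"
    then obtain y t where yt: "(y, t) \<in> MN n (pos n u) (side u)" "w = vert n y t" by auto
    then have "2 \<le> y" "y \<le> 3*n" "madj (pos n u) (side u) y t" by (auto simp: MN_def)
    then show "w \<in> {w \<in> Lverts n. Ladj n u w}" using VP[OF n, of y t] LA[OF n u] yt(2) by auto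
  qed
  moreover have "inj_on (\<lambda>(y, t). vert n y t) (MN n (pos n u) (side u))"
    by (rule inj_on_subset[OF vert_inj[OF n]]) (auto simp: MN_def)
  ultimately show ?thesis unfolding gdegree_def using card_image MN_card[OF n] VR[OF n u] by metis
qed

definition tt :: "nat \<Rightarrow> nat \<Rightarrow> nat" where
  "tt n j = (if j = 0 then 2 else if j = n then 3*n else 3*j+1)"

lemma tt_range: "n \<ge> 2 \<Longrightarrow> j \<le> n \<Longrightarrow> 2 \<le> tt n j \<and> tt n j \<le> 3*n"
  by (auto simp: tt_def)

lemma tt_mono: "n \<ge> 2 \<Longrightarrow> k \<le> n \<Longrightarrow> j < k \<Longrightarrow> tt n j < tt n k"
  by (auto simp: tt_def)

lemma tt_inj: "n \<ge> 2 \<Longrightarrow> k \<le> n \<Longrightarrow> j \<le> n \<Longrightarrow> tt n j = tt n k \<Longrightarrow> j = k"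
  by (metis linorder_neqE_nat tt_mono less_irrefl order.strict_implies_order)

lemma tt_mdeg: "n \<ge> 2 \<Longrightarrow> j \<le> n \<Longrightarrow> mdeg n (tt n j) = 2"
  by (auto simp: tt_def mdeg_def)

lemma g_inj:
  assumes n: "n \<ge> 2" and "j \<le> n" "k \<le> n" "vert n (tt n j) s = vert n (tt n k) t"
  shows "j = k \<and> s = t"
proof -
  have "pos n (vert n (tt n j) s) = tt n j" "side (vert n (tt n j) s) = s"
    using VP[OF n] tt_range[OF n assms(2)] by auto
  moreover have "pos n (vert n (tt n k) t) = tt n k" "side (vert n (tt n k) t) = t"
    using VP[OF n] tt_range[OF n assms(3)] by auto
  ultimately show ?thesis using assms tt_inj[OF n] by metis
qed

lemma deg2_char:
  assumes n: "n \<ge> 2"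
  shows "(u \<in> Lverts n \<and> gdegree (Lverts n) (Ladj n) u = 2) \<longleftrightarrow> (\<exists>j\<le>n. \<exists>s. u = vert n (tt n j) s)"
proof
  assume "\<exists>j\<le>n. \<exists>s. u = vert n (tt n j) s"
  then obtain j s where js: "j \<le> n" "u = vert n (tt n j) s" by blast
  have u: "u \<in> Lverts n" "pos n u = tt n j" using VP[OF n] tt_range[OF n js(1)] js(2) by auto
  then show "u \<in> Lverts n \<and> gdegree (Lverts n) (Ladj n) u = 2"
    using Gdeg[OF n u(1)] tt_mdeg[OF n js(1)] by simp
next
  assume h: "u \<in> Lverts n \<and> gdegree (Lverts n) (Ladj n) u = 2"
  then have r: "2 \<le> pos n u" "pos n u \<le> 3*n" "vert n (pos n u) (side u) = u" using VR[OF n] by auto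
  have "mdeg n (pos n u) = 2" using h Gdeg[OF n, of u] by auto
  then have c: "pos n u = 2 \<or> pos n u = 3*n \<or> pos n u mod 3 = 1" by (auto simp: mdeg_def split: if_splits)
  have "\<exists>j\<le>n. tt n j = pos n u"
  proof -
    consider "pos n u = 2" | "pos n u = 3*n" | "pos n u \<noteq> 2" "pos n u \<noteq> 3*n" "pos n u mod 3 = 1" using c by blast
    then show ?thesis
    proof cases
      case 1 then show ?thesis by (intro exI[of _ 0]) (simp add: tt_def)
    next
      case 2 then show ?thesis using n by (intro exI[of _ n]) (simp add: tt_def)
    next
      case 3
      then have "1 \<le> pos n u div 3" "pos n u div 3 < n" "3 * (pos n u div 3) + 1 = pos n u"
        using r by presburger+
      then show ?thesis by (intro exI[of _ "pos n u div 3"]) (simp add: tt_def)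
    qed
  qed
  then show "\<exists>j\<le>n. \<exists>s. u = vert n (tt n j) s" using r(3) by metis
qed

definition J1 :: "nat \<Rightarrow> (nat \<times> nat \<times> bool \<times> bool) set" where
  "J1 n = (SIGMA k:{..n}. SIGMA j:{..<k}. (UNIV :: bool set) \<times> (UNIV :: bool set))"

definition J2 :: "nat \<Rightarrow> (nat \<times> nat \<times> bool \<times> bool) set" where
  "J2 n = (\<lambda>k. (k, k, True, False)) ` {..n}"

definition hh :: "nat \<Rightarrow> nat \<times> nat \<times> bool \<times> bool \<Rightarrow> lvert set" where
  "hh n q = (case q of (k, j, s, t) \<Rightarrow> {vert n (tt n j) s, vert n (tt n k) t})"

lemma J_dist:
  assumes n: "n \<ge> 2" and q: "(k, j, s, t) \<in> J1 n \<union> J2 n"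
  shows "vert n (tt n j) s \<noteq> vert n (tt n k) t" "j \<le> n" "k \<le> n" "j \<le> k"
  using q g_inj[OF n, of j k s t] by (auto simp: J1_def J2_def)

lemma hh_inj: assumes n: "n \<ge> 2" shows "inj_on (hh n) (J1 n \<union> J2 n)"
proof (rule inj_onI)
  fix p q assume p: "p \<in> J1 n \<union> J2 n" and q: "q \<in> J1 n \<union> J2 n" and e: "hh n p = hh n q"
  obtain k j s t where pe: "p = (k, j, s, t)" by (cases p) auto
  obtain k' j' s' t' where qe: "q = (k', j', s', t')" by (cases q) auto
  have e': "{vert n (tt n j) s, vert n (tt n k) t} = {vert n (tt n j') s', vert n (tt n k') t'}"
    using e pe qe by (simp add: hh_def)
  note dp = J_dist[OF n p[unfolded pe]] and dq = J_dist[OF n q[unfolded qe]]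
  show "p = q"
  proof (cases "vert n (tt n j) s = vert n (tt n j') s'")
    case True
    then have "vert n (tt n k) t = vert n (tt n k') t'" using e' dp(1) by (auto simp: doubleton_eq_iff)
    then show ?thesis using True g_inj[OF n] dp dq pe qe by blast
  next
    case False
    then have "vert n (tt n j) s = vert n (tt n k') t'" "vert n (tt n k) t = vert n (tt n j') s'"
      using e' by (auto simp: doubleton_eq_iff)
    then have "j = k'" "s = t'" "k = j'" "t = s'" using g_inj[OF n] dp dq by blast+
    then show ?thesis using p q pe qe by (auto simp: J1_def J2_def)
  qed
qed

lemma hh_image: assumes n: "n \<ge> 2" shows "deg_pairs (Lverts n) (Ladj n) 2 = hh n ` (J1 n \<union> J2 n)"
proof (intro equalityI subsetI)
  fix e assume "e \<in> deg_pairs (Lverts n) (Ladj n) 2"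
  then obtain u v where uv: "e = {u, v}" "u \<in> Lverts n" "v \<in> Lverts n" "u \<noteq> v"
    "gdegree (Lverts n) (Ladj n) u = 2" "gdegree (Lverts n) (Ladj n) v = 2"
    by (auto simp: deg_pairs_def)
  obtain j s where js: "j \<le> n" "u = vert n (tt n j) s" using deg2_char[OF n, of u] uv by blast
  obtain k t where kt: "k \<le> n" "v = vert n (tt n k) t" using deg2_char[OF n, of v] uv by blast
  consider "j < k" | "k < j" | "j = k" by arith
  then show "e \<in> hh n ` (J1 n \<union> J2 n)"
  proof cases
    case 1
    then have "(k, j, s, t) \<in> J1 n" using kt by (auto simp: J1_def)
    moreover have "e = hh n (k, j, s, t)" using uv js kt by (simp add: hh_def)
    ultimately show ?thesis by blast
  next
    case 2
    then have "(j, k, t, s) \<in> J1 n" using js by (auto simp: J1_def)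
    moreover have "e = hh n (j, k, t, s)" using uv js kt by (auto simp: hh_def)
    ultimately show ?thesis by blast
  next
    case 3
    have "s \<noteq> t" using uv(4) js(2) kt(2) 3 by blast
    have "e = hh n (k, k, True, False)"
    proof (cases s)
      case True
      then have "\<not> t" using \<open>s \<noteq> t\<close> by simp
      then show ?thesis using True uv js kt 3 by (simp add: hh_def)
    next
      case False
      then have "t" using \<open>s \<noteq> t\<close> by simp
      then show ?thesis using False uv js kt 3 by (simp add: hh_def insert_commute)
    qed
    moreover have "(k, k, True, False) \<in> J2 n" using kt by (auto simp: J2_def)
    ultimately show ?thesis by blast
  qed
next
  fix e assume "e \<in> hh n ` (J1 n \<union> J2 n)"
  then obtain k j s t where q: "(k, j, s, t) \<in> J1 n \<union> J2 n" "e = hh n (k, j, s, t)" by auto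
  note d = J_dist[OF n q(1)]
  have "vert n (tt n j) s \<in> Lverts n \<and> gdegree (Lverts n) (Ladj n) (vert n (tt n j) s) = 2"
    using deg2_char[OF n] d by blast
  moreover have "vert n (tt n k) t \<in> Lverts n \<and> gdegree (Lverts n) (Ladj n) (vert n (tt n k) t) = 2"
    using deg2_char[OF n] d by blast
  ultimately show "e \<in> deg_pairs (Lverts n) (Ladj n) 2"
    using q(2) d(1) unfolding deg_pairs_def hh_def by auto
qed

lemma dd_sym: "dd a b x s = dd x s a b"
  by (auto simp: dd_def)

lemma pd_hh:
  assumes n: "n \<ge> 2" and q: "(k, j, s, t) \<in> J1 n \<union> J2 n"
  shows "pair_dist (Lverts n) (Ladj n) (hh n (k, j, s, t)) = dd (tt n j) s (tt n k) t"
proof -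
  note d = J_dist[OF n q]
  have a: "vert n (tt n j) s \<in> Lverts n" "pos n (vert n (tt n j) s) = tt n j" "side (vert n (tt n j) s) = s"
    using VP[OF n] tt_range[OF n d(2)] by auto
  have b: "vert n (tt n k) t \<in> Lverts n" "pos n (vert n (tt n k) t) = tt n k" "side (vert n (tt n k) t) = t"
    using VP[OF n] tt_range[OF n d(3)] by auto
  have "pair_dist (Lverts n) (Ladj n) (hh n (k, j, s, t)) =
      gdist (Lverts n) (Ladj n) (vert n (tt n j) s) (vert n (tt n k) t)"
  proof -
    have sym: "gdist (Lverts n) (Ladj n) (vert n (tt n j) s) (vert n (tt n k) t) =
      gdist (Lverts n) (Ladj n) (vert n (tt n k) t) (vert n (tt n j) s)"
      by (simp only: Gdist[OF n a(1) b(1)] Gdist[OF n b(1) a(1)]) (rule dd_sym)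
    show ?thesis by (simp add: hh_def pair_dist_eq[OF sym d(1)])
  qed
  then show ?thesis using Gdist[OF n a(1) b(1)] a b by simp
qed

lemma dd_J1: "n \<ge> 2 \<Longrightarrow> k \<le> n \<Longrightarrow> j < k \<Longrightarrow>
   dd (tt n j) s (tt n k) t = tt n k - tt n j + (if s = t then 0 else 1)"
  using tt_mono[of n k j] by (auto simp: dd_def)

lemma dd_J2: "n \<ge> 2 \<Longrightarrow> k \<le> n \<Longrightarrow> dd (tt n k) True (tt n k) False = (if k = 0 \<or> k = n then 1 else 3)"
  by (auto simp: dd_def tt_def)

lemma monom2: "monom (2::nat) d = monom 1 d + monom 1 d"
  by (simp add: add_monom)

lemma base_sum:
  assumes n: "n \<ge> 2"
  shows "base_poly (Lverts n) (Ladj n) 2 =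
    (\<Sum>k\<le>n. \<Sum>j<k. monom (2::nat) (tt n k - tt n j) + monom 2 (Suc (tt n k - tt n j)))
    + (\<Sum>k\<le>n. monom (1::nat) (if k = 0 \<or> k = n then 1 else 3))"
proof -
  have fin1: "finite (J1 n)" by (simp add: J1_def)
  have fin2: "finite (J2 n)" by (simp add: J2_def)
  have disj: "J1 n \<inter> J2 n = {}" by (auto simp: J1_def J2_def)
  have "base_poly (Lverts n) (Ladj n) 2 = (\<Sum>q\<in>J1 n \<union> J2 n. monom 1 (pair_dist (Lverts n) (Ladj n) (hh n q)))"
    unfolding base_poly_def hh_image[OF n] using sum.reindex[OF hh_inj[OF n]] by (simp add: comp_def)
  also have "\<dots> = (\<Sum>q\<in>J1 n \<union> J2 n. monom (1::nat) (case q of (k, j, s, t) \<Rightarrow> dd (tt n j) s (tt n k) t))"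
    by (rule sum.cong) (auto simp: pd_hh[OF n])
  also have "\<dots> = (\<Sum>q\<in>J1 n. monom (1::nat) (case q of (k, j, s, t) \<Rightarrow> dd (tt n j) s (tt n k) t))
       + (\<Sum>q\<in>J2 n. monom (1::nat) (case q of (k, j, s, t) \<Rightarrow> dd (tt n j) s (tt n k) t))"
    by (rule sum.union_disjoint[OF fin1 fin2 disj])
  also have "(\<Sum>q\<in>J1 n. monom (1::nat) (case q of (k, j, s, t) \<Rightarrow> dd (tt n j) s (tt n k) t))
     = (\<Sum>k\<le>n. \<Sum>j<k. \<Sum>s\<in>UNIV. \<Sum>t\<in>UNIV. monom (1::nat) (dd (tt n j) s (tt n k) t))"
    unfolding J1_def by (simp add: sum.Sigma split_def)
  also have "\<dots> = (\<Sum>k\<le>n. \<Sum>j<k. monom (2::nat) (tt n k - tt n j) + monom 2 (Suc (tt n k - tt n j)))"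
  proof (intro sum.cong refl)
    fix k j assume "k \<in> {..n}" "j \<in> {..<k}"
    then show "(\<Sum>s\<in>UNIV. \<Sum>t\<in>UNIV. monom 1 (dd (tt n j) s (tt n k) t)) =
        monom (2::nat) (tt n k - tt n j) + monom 2 (Suc (tt n k - tt n j))"
      using dd_J1[OF n, of k j] by (simp add: UNIV_bool monom2 algebra_simps)
  qed
  also have "(\<Sum>q\<in>J2 n. monom (1::nat) (case q of (k, j, s, t) \<Rightarrow> dd (tt n j) s (tt n k) t))
     = (\<Sum>k\<le>n. monom (1::nat) (if k = 0 \<or> k = n then 1 else 3))"
    unfolding J2_def
    by (subst sum.reindex) (auto simp: inj_on_def dd_J2[OF n])
  finally show ?thesis .
qed



definition ZZ :: "(nat \<Rightarrow> 'a::comm_semiring_1) \<Rightarrow> nat \<Rightarrow> 'a" where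
  "ZZ X d = 2 * X d + 2 * X (Suc d)"

definition tt0 :: "nat \<Rightarrow> nat" where
  "tt0 k = (if k = 0 then 2 else 3*k+1)"

lemma rev_sum: "(\<Sum>j<(m::nat). f (m - j)) = (\<Sum>d=1..m. (f d :: 'a::comm_monoid_add))"
proof (induction m)
  case 0 then show ?case by simp
next
  case (Suc m)
  have "(\<Sum>j<Suc m. f (Suc m - j)) = f (Suc m) + (\<Sum>j<m. f (m - j))"
    by (subst sum.lessThan_Suc_shift) simp
  then show ?case using Suc by (simp add: add.commute)
qed

lemma W_closed:
  fixes X :: "nat \<Rightarrow> 'a::comm_semiring_1"
  shows "(\<Sum>k\<le>m. \<Sum>j<k. ZZ X (tt0 k - tt0 j)) =
     (\<Sum>k=1..m. ZZ X (3*k-1)) + (\<Sum>d=1..m. of_nat (m-d) * ZZ X (3*d))"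
proof (induction m)
  case 0 then show ?case by simp
next
  case (Suc m)
  have inner: "(\<Sum>j<Suc m. ZZ X (tt0 (Suc m) - tt0 j)) = ZZ X (3*m+2) + (\<Sum>d=1..m. ZZ X (3*d))"
  proof -
    have "(\<Sum>j<Suc m. ZZ X (tt0 (Suc m) - tt0 j)) = ZZ X (3*m+2) + (\<Sum>j<m. ZZ X (tt0 (Suc m) - tt0 (Suc j)))"
      by (subst sum.lessThan_Suc_shift) (simp add: tt0_def)
    also have "(\<Sum>j<m. ZZ X (tt0 (Suc m) - tt0 (Suc j))) = (\<Sum>j<m. (\<lambda>d. ZZ X (3*d)) (m - j))"
      by (rule sum.cong) (auto simp: tt0_def diff_mult_distrib2)
    also have "\<dots> = (\<Sum>d=1..m. ZZ X (3*d))" by (rule rev_sum)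
    finally show ?thesis .
  qed
  have r2: "(\<Sum>d=1..m. of_nat (Suc m - d) * ZZ X (3*d)) =
      (\<Sum>d=1..m. of_nat (m-d) * ZZ X (3*d)) + (\<Sum>d=1..m. ZZ X (3*d))"
  proof -
    have "(\<Sum>d=1..m. of_nat (Suc m - d) * ZZ X (3*d)) = (\<Sum>d=1..m. of_nat (m-d) * ZZ X (3*d) + ZZ X (3*d))"
      by (rule sum.cong) (auto simp: Suc_diff_le algebra_simps)
    then show ?thesis by (simp add: sum.distrib)
  qed
  have "(\<Sum>k\<le>Suc m. \<Sum>j<k. ZZ X (tt0 k - tt0 j)) =
      (\<Sum>k\<le>m. \<Sum>j<k. ZZ X (tt0 k - tt0 j)) + (\<Sum>j<Suc m. ZZ X (tt0 (Suc m) - tt0 j))"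
    by simp
  also have "\<dots> = (\<Sum>k=1..m. ZZ X (3*k-1)) + (\<Sum>d=1..m. of_nat (m-d) * ZZ X (3*d))
      + ZZ X (3*m+2) + (\<Sum>d=1..m. ZZ X (3*d))"
    using Suc inner by (simp add: algebra_simps)
  also have "\<dots> = (\<Sum>k=1..Suc m. ZZ X (3*k-1)) + (\<Sum>d=1..Suc m. of_nat (Suc m-d) * ZZ X (3*d))"
    using r2 by (simp add: algebra_simps)
  finally show ?case .
qed

lemma C_part:
  fixes X :: "nat \<Rightarrow> 'a::comm_semiring_1"
  shows "(\<Sum>j<Suc m. ZZ X (3*Suc m - tt0 j)) = ZZ X (3*Suc m - 2) + (\<Sum>d=1..m. ZZ X (3*d-1))"
proof -
  have "(\<Sum>j<Suc m. ZZ X (3*Suc m - tt0 j)) = ZZ X (3*Suc m - 2) + (\<Sum>j<m. ZZ X (3*Suc m - tt0 (Suc j)))"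
    by (subst sum.lessThan_Suc_shift) (simp add: tt0_def)
  also have "(\<Sum>j<m. ZZ X (3*Suc m - tt0 (Suc j))) = (\<Sum>j<m. (\<lambda>d. ZZ X (3*d-1)) (m - j))"
    by (rule sum.cong) (auto simp: tt0_def diff_mult_distrib2)
  also have "\<dots> = (\<Sum>d=1..m. ZZ X (3*d-1))" by (rule rev_sum)
  finally show ?thesis .
qed

lemma D_part:
  fixes X :: "nat \<Rightarrow> 'a::comm_semiring_1"
  shows "(\<Sum>k\<le>Suc m. X (if k = 0 \<or> k = Suc m then 1 else 3)) = 2 * X 1 + of_nat m * X 3"
proof -
  have "(\<Sum>k\<le>Suc m. X (if k = 0 \<or> k = Suc m then 1 else 3)) =
     X 1 + (\<Sum>k\<le>m. X (if Suc k = Suc m then 1 else 3))"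
    by (subst sum.atMost_Suc_shift) simp
  also have "(\<Sum>k\<le>m. X (if Suc k = Suc m then 1 else 3)) = (\<Sum>k<m. X 3) + X 1"
    by (simp add: lessThan_Suc_atMost[symmetric] del: lessThan_Suc_atMost)
  finally show ?thesis by (simp add: algebra_simps mult_2)
qed

lemma final_alg0:
  fixes X :: "nat \<Rightarrow> 'a::comm_semiring_1"
  assumes m: "m \<ge> 1"
  shows "(\<Sum>k\<le>m. \<Sum>j<k. ZZ X (tt0 k - tt0 j)) + (\<Sum>j<Suc m. ZZ X (3*Suc m - tt0 j))
       + (\<Sum>k\<le>Suc m. X (if k = 0 \<or> k = Suc m then 1 else 3)) =
   2 * X 1 + of_nat (3*Suc m-1) * X 3 + (\<Sum>k=2..Suc m-1. of_nat (2*(Suc m-k)) * X (3*k-2))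
   + (\<Sum>k=1..Suc m-1. 4 * X (3*k-1)) + (\<Sum>k=2..Suc m-1. of_nat (2*(Suc m-k+1)) * X (3*k))
   + 2 * X (3*Suc m-2) + 2 * X (3*Suc m-1)"
proof -
  obtain p where p: "m = Suc p" using m by (cases m) auto
  define n where "n = Suc m"
  define g where "g k = 2 * of_nat (m-k) * X (3*k+1)" for k
  define h where "h k = (2 + 2 + 2 * of_nat (m-k)) * X (3*k)" for k
  have S1: "(\<Sum>k=2..n-1. of_nat (2*(n-k)) * X (3*k-2)) = (\<Sum>k=1..m. g k)"
  proof -
    have "(\<Sum>k=2..n-1. of_nat (2*(n-k)) * X (3*k-2)) = (\<Sum>k=Suc 1..Suc p. of_nat (2*(n-k)) * X (3*k-2))"
      using p n_def by (simp add: numeral_2_eq_2 del: sum.cl_ivl_Suc)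
    also have "\<dots> = (\<Sum>k=1..p. of_nat (2*(n - Suc k)) * X (3 * Suc k - 2))"
      by (rule sum.shift_bounds_cl_Suc_ivl)
    also have "\<dots> = (\<Sum>k=1..p. g k)"
    proof (rule sum.cong)
      fix k assume "k \<in> {1..p}"
      have "n - Suc k = m - k" "3 * Suc k - 2 = 3*k+1" by (auto simp: n_def)
      then show "of_nat (2*(n - Suc k)) * X (3 * Suc k - 2) = g k" by (simp add: g_def)
    qed simp
    also have "\<dots> = (\<Sum>k=1..m. g k)" using p by (simp add: g_def)
    finally show ?thesis .
  qed
  have S3: "of_nat (3*n-1) * X 3 + (\<Sum>k=2..n-1. of_nat (2*(n-k+1)) * X (3*k)) = of_nat m * X 3 + (\<Sum>k=1..m. h k)"
  proof -
    have "(\<Sum>k=1..m. h k) = h 1 + (\<Sum>k=2..m. h k)"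
      using m by (subst sum.atLeast_Suc_atMost) (auto simp: numeral_2_eq_2)
    moreover have "h 1 = of_nat (2*n) * X 3"
    proof -
      have "2*n = 2 + 2 + 2*(m-1)" using m by (simp add: n_def)
      then have "(of_nat (2*n)::'a) = 2 + 2 + 2 * of_nat (m-1)" by (simp only: of_nat_add of_nat_mult of_nat_numeral)
      then show ?thesis by (simp add: h_def)
    qed
    moreover have "(\<Sum>k=2..m. h k) = (\<Sum>k=2..n-1. of_nat (2*(n-k+1)) * X (3*k))"
    proof (rule sum.cong)
      fix k assume k: "k \<in> {2..n-1}"
      have "2*(n-k+1) = 2 + 2 + 2*(m-k)" using k by (auto simp: n_def)
      then have "(of_nat (2*(n-k+1))::'a) = 2 + 2 + 2 * of_nat (m-k)" by (simp only: of_nat_add of_nat_mult of_nat_numeral)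
      then show "h k = of_nat (2*(n-k+1)) * X (3*k)" by (simp add: h_def)
    qed (simp add: n_def)
    moreover have "(of_nat (3*n-1) :: 'a) = of_nat m + of_nat (2*n)"
    proof -
      have e: "3*n-1 = m + 2*n" by (simp add: n_def)
      show ?thesis unfolding e by (rule of_nat_add)
    qed
    ultimately show ?thesis by (simp add: algebra_simps)
  qed
  have pw: "ZZ X (3*k-1) + of_nat (m-k) * ZZ X (3*k) + ZZ X (3*k-1) = g k + 4 * X (3*k-1) + h k"
    if k: "k \<in> {1..m}" for k
  proof -
    have s: "Suc (3*k-1) = 3*k" using k by auto
    have f: "(4::'a) = 2 + 2" by simp
    have s2: "3*k+1 = Suc (3*k)" by simp
    show ?thesis
      by (simp only: ZZ_def g_def h_def s s2 f distrib_left distrib_right add.assoc[symmetric])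
        (simp only: add_ac mult_ac)
  qed
  have LHS: "(\<Sum>k\<le>m. \<Sum>j<k. ZZ X (tt0 k - tt0 j)) + (\<Sum>j<Suc m. ZZ X (3*Suc m - tt0 j))
       + (\<Sum>k\<le>Suc m. X (if k = 0 \<or> k = Suc m then 1 else 3)) =
     2 * X 1 + of_nat m * X 3 + (\<Sum>k=1..m. ZZ X (3*k-1) + of_nat (m-k) * ZZ X (3*k) + ZZ X (3*k-1))
     + ZZ X (3*Suc m - 2)"
    unfolding W_closed C_part D_part by (simp add: sum.distrib algebra_simps)
  have E1: "(\<Sum>k=1..m. ZZ X (3*k-1) + of_nat (m-k) * ZZ X (3*k) + ZZ X (3*k-1)) = (\<Sum>k=1..m. g k + 4 * X (3*k-1) + h k)"
    by (rule sum.cong) (use pw in auto)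
  have E2: "ZZ X (3*n - 2) = 2 * X (3*n-2) + 2 * X (3*n-1)"
    by (simp add: ZZ_def n_def)
  have E3: "(\<Sum>k=1..m. g k + 4 * X (3*k-1) + h k) = (\<Sum>k=1..m. g k) + (\<Sum>k=1..n-1. 4 * X (3*k-1)) + (\<Sum>k=1..m. h k)"
    by (simp add: sum.distrib n_def)
  have "(\<Sum>k\<le>m. \<Sum>j<k. ZZ X (tt0 k - tt0 j)) + (\<Sum>j<n. ZZ X (3*n - tt0 j))
       + (\<Sum>k\<le>n. X (if k = 0 \<or> k = n then 1 else 3)) =
     2 * X 1 + of_nat m * X 3 + (\<Sum>k=1..m. ZZ X (3*k-1) + of_nat (m-k) * ZZ X (3*k) + ZZ X (3*k-1))
     + ZZ X (3*n - 2)" using LHS by (simp only: n_def)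
  also have "\<dots> = 2 * X 1 + (of_nat m * X 3 + (\<Sum>k=1..m. h k)) + (\<Sum>k=1..m. g k) + (\<Sum>k=1..n-1. 4 * X (3*k-1))
     + (2 * X (3*n-2) + 2 * X (3*n-1))"
    unfolding E1 E2 E3 by (simp only: add_ac)
  also have "\<dots> = 2 * X 1 + (of_nat (3*n-1) * X 3 + (\<Sum>k=2..n-1. of_nat (2*(n-k+1)) * X (3*k)))
     + (\<Sum>k=2..n-1. of_nat (2*(n-k)) * X (3*k-2)) + (\<Sum>k=1..n-1. 4 * X (3*k-1))
     + (2 * X (3*n-2) + 2 * X (3*n-1))"
    by (simp only: S1 S3)
  also have "\<dots> = 2 * X 1 + of_nat (3*n-1) * X 3 + (\<Sum>k=2..n-1. of_nat (2*(n-k)) * X (3*k-2))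
   + (\<Sum>k=1..n-1. 4 * X (3*k-1)) + (\<Sum>k=2..n-1. of_nat (2*(n-k+1)) * X (3*k))
   + 2 * X (3*n-2) + 2 * X (3*n-1)"
    by (simp only: add_ac)
  finally show ?thesis unfolding n_def .
qed


lemma monom2': "monom (2::nat) d = 2 * monom 1 d"
  by (simp add: monom2 mult_2)

lemma monom_of: "monom (c::nat) d = of_nat c * monom 1 d"
proof -
  have "of_nat c = monom c 0" by (simp add: of_nat_poly monom_0)
  then show ?thesis by (simp add: mult_monom)
qed

lemma tt_tt0: "k < n \<Longrightarrow> tt n k = tt0 k"
  by (simp add: tt_def tt0_def)

theorem theorem2p4:
  fixes n :: nat
  assumes "n \<ge> 2"
  shows "base_poly (Lverts n) (Ladj n) 2 =
      monom 2 1 + monom (3*n - 1) 3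
    + (\<Sum>k=2..n-1. monom (2*(n-k)) (3*k - 2))
    + (\<Sum>k=1..n-1. monom 4 (3*k - 1))
    + (\<Sum>k=2..n-1. monom (2*(n-k+1)) (3*k))
    + monom 2 (3*n - 2) + monom 2 (3*n - 1)"
proof -
  obtain m where nm: "n = Suc m" "m \<ge> 1" using assms by (cases n) auto
  define X where "X d = monom (1::nat) d" for d
  have "base_poly (Lverts n) (Ladj n) 2 =
     (\<Sum>k\<le>n. \<Sum>j<k. ZZ X (tt n k - tt n j)) + (\<Sum>k\<le>n. X (if k = 0 \<or> k = n then 1 else 3))"
    using base_sum[OF assms] unfolding ZZ_def monom2' X_def by simp
  also have "(\<Sum>k\<le>n. \<Sum>j<k. ZZ X (tt n k - tt n j)) =
      (\<Sum>k\<le>m. \<Sum>j<k. ZZ X (tt0 k - tt0 j)) + (\<Sum>j<Suc m. ZZ X (3*Suc m - tt0 j))"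
  proof -
    have "(\<Sum>k\<le>n. \<Sum>j<k. ZZ X (tt n k - tt n j)) =
       (\<Sum>k\<le>m. \<Sum>j<k. ZZ X (tt n k - tt n j)) + (\<Sum>j<Suc m. ZZ X (tt n (Suc m) - tt n j))"
      unfolding nm(1) by simp
    also have "(\<Sum>k\<le>m. \<Sum>j<k. ZZ X (tt n k - tt n j)) = (\<Sum>k\<le>m. \<Sum>j<k. ZZ X (tt0 k - tt0 j))"
      by (intro sum.cong refl) (simp add: tt_tt0 nm(1))
    also have "(\<Sum>j<Suc m. ZZ X (tt n (Suc m) - tt n j)) = (\<Sum>j<Suc m. ZZ X (3*Suc m - tt0 j))"
    proof (intro sum.cong refl)
      fix j assume j: "j \<in> {..<Suc m}"
      have "tt n (Suc m) = 3*Suc m" using nm(1) by (simp add: tt_def)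
      moreover have "tt n j = tt0 j" using j nm(1) by (intro tt_tt0) auto
      ultimately show "ZZ X (tt n (Suc m) - tt n j) = ZZ X (3*Suc m - tt0 j)" by simp
    qed
    finally show ?thesis .
  qed
  also have "(\<Sum>k\<le>m. \<Sum>j<k. ZZ X (tt0 k - tt0 j)) + (\<Sum>j<Suc m. ZZ X (3*Suc m - tt0 j))
       + (\<Sum>k\<le>n. X (if k = 0 \<or> k = n then 1 else 3)) =
   2 * X 1 + of_nat (3*Suc m-1) * X 3 + (\<Sum>k=2..Suc m-1. of_nat (2*(Suc m-k)) * X (3*k-2))
   + (\<Sum>k=1..Suc m-1. 4 * X (3*k-1)) + (\<Sum>k=2..Suc m-1. of_nat (2*(Suc m-k+1)) * X (3*k))
   + 2 * X (3*Suc m-2) + 2 * X (3*Suc m-1)"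
    unfolding nm(1) by (rule final_alg0[OF nm(2)])
  also have "\<dots> = monom 2 1 + monom (3*n - 1) 3
    + (\<Sum>k=2..n-1. monom (2*(n-k)) (3*k - 2))
    + (\<Sum>k=1..n-1. monom 4 (3*k - 1))
    + (\<Sum>k=2..n-1. monom (2*(n-k+1)) (3*k))
    + monom 2 (3*n - 2) + monom 2 (3*n - 1)"
    unfolding nm(1) X_def by (simp only: monom_of[of 2] monom_of[of 4] monom_of[of "3 * Suc m - 1"]
       monom_of[of "2 * (Suc m - _)"] monom_of[of "2 * (Suc m - _ + 1)"] of_nat_numeral)
  finally show ?thesis .
qed

end
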